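(* Let $\|\cdot\|_\alpha$ be a submultiplicative norm belonging to a dimension-invariant family of matrix norms, and let $A$ be an $n\times n$ block strongly nonsingular matrix with blocking $\mathcal{I}$ having $n_t$ blocks. Then $$\rho^{\mathcal{I}}_\alpha(A)\le 1+\max_{1\le k\le n_t-1}\Big[\|A_{1:k,1:k}^{-1}\|_\alpha\min\big(\|A_{k+1:n_t,1:k}\|_\alpha,\|A_{1:k,k+1:n_t}\|_\alpha\big)\Big]\le 1+\max_{1\le k\le n_t-1}\|A_{1:k,1:k}^{-1}\|_\alpha\|A\|_\alpha.$$
   Context: A dimension-invariant family of matrix norms is a choice of norm for matrices of every size such that for every matrix $B$ and every partition of its rows and columns into contiguous blocks $B_{i,j}$, $\max_{i,j}\|B_{i,j}\|\le\|B\|\le\sum_{i,j}\|B_{i,j}\|$. Submultiplicative: $\|BC\|\le\|B\|\|C\|$ for all conformal $B,C$. Blocking: a strictly increasing list $\mathcal{I}=[1=\mathcal{I}_1<\dots<\mathcal{I}_{n_t+1}=n+1]$; $A_{i,j}=A[\mathcal{I}_i:\mathcal{I}_{i+1}-1,\ \mathcal{I}_j:\mathcal{I}_{j+1}-1]$ and $A_{i:j,k:l}$ is the corresponding range of blocks. Block strongly nonsingular: every $A_{1:k,1:k}$ is nonsingular. Block Schur complements: $A^{(1)}=A$, $A^{(k+1)}=A^{(k)}_{k+1:n_t,k+1:n_t}-A^{(k)}_{k+1:n_t,k}(A^{(k)}_{k,k})^{-1}A^{(k)}_{k,k+1:n_t}$. Block growth factor: $\rho^{\mathcal{I}}_\alpha(A)=\max_{1\le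 k\le n_t}\|A^{(k)}\|_\alpha/\|A\|_\alpha$. *)

theory Defs
  imports "Jordan_Normal_Form.Matrix"
begin

text \<open>Matrices are Jordan_Normal_Form matrices over a real normed field (covers real and complex).
  All indices are 0-based.\<close>

definition subm :: "'a mat \<Rightarrow> nat \<Rightarrow> nat \<Rightarrow> nat \<Rightarrow> nat \<Rightarrow> 'a mat" where
  "subm A r0 r1 c0 c1 = mat (r1 - r0) (c1 - c0) (\<lambda>(i, j). A $$ (r0 + i, c0 + j))"

definition minv :: "'a :: field mat \<Rightarrow> 'a mat" where
  "minv A = (if invertible_mat A
     then (SOME B. B \<in> carrier_mat (dim_row A) (dim_row A) \<and> A * B = 1\<^sub>m (dim_row A) \<and> B * A = 1\<^sub>m (dim_row A))
     else 0\<^sub>m (dim_row A) (dim_row A))"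

text \<open>A blocking of size n: strictly increasing list I with I!0 = 0 and last I = n.
  It has n_t = length I - 1 \<ge> 1 blocks; block i (0-based) is the index range I!i ..< I!(i+1).\<close>
definition blocking :: "nat list \<Rightarrow> nat \<Rightarrow> bool" where
  "blocking I n \<longleftrightarrow> length I \<ge> 2 \<and> sorted_wrt (<) I \<and> I ! 0 = 0 \<and> last I = n"

definition nblocks :: "nat list \<Rightarrow> nat" where
  "nblocks I = length I - 1"

definition blk :: "nat list \<Rightarrow> 'a mat \<Rightarrow> nat \<Rightarrow> nat \<Rightarrow> nat \<Rightarrow> nat \<Rightarrow> 'a mat" where
  "blk I A i j k l = subm A (I ! i) (I ! j) (I ! k) (I ! l)"

definition block_strongly_nonsingular :: "nat list \<Rightarrow> 'a :: field mat \<Rightarrow> bool" where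
  "block_strongly_nonsingular I A \<longleftrightarrow>
     (\<forall>k \<in> {1..nblocks I}. invertible_mat (blk I A 0 k 0 k))"

text \<open>Block Schur complements: schur I A k (0-based k) is the paper's A^(k+1);
  it is the square matrix indexed by the original rows/columns I!k ..< n.\<close>
fun schur :: "nat list \<Rightarrow> 'a :: field mat \<Rightarrow> nat \<Rightarrow> 'a mat" where
  "schur I A 0 = A"
| "schur I A (Suc k) =
    (let S = schur I A k; m = dim_row S; d = I ! Suc k - I ! k
     in subm S d m d m - subm S d m 0 d * minv (subm S 0 d 0 d) * subm S 0 d d m)"

definition growth_factor :: "('a mat \<Rightarrow> real) \<Rightarrow> nat list \<Rightarrow> 'a :: field mat \<Rightarrow> real" where
  "growth_factor nrm I A = Max ((\<lambda>k. nrm (schur I A k) / nrm A) ` {..<nblocks I})"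

definition matrix_norm_family :: "('a :: real_normed_field mat \<Rightarrow> real) \<Rightarrow> bool" where
  "matrix_norm_family nrm \<longleftrightarrow>
    (\<forall>m n. \<forall>A \<in> carrier_mat m n. \<forall>B \<in> carrier_mat m n. \<forall>c.
        nrm A \<ge> 0 \<and> (nrm A = 0 \<longleftrightarrow> A = 0\<^sub>m m n) \<and>
        nrm (c \<cdot>\<^sub>m A) = norm c * nrm A \<and> nrm (A + B) \<le> nrm A + nrm B)"

definition dimension_invariant :: "('a :: real_normed_field mat \<Rightarrow> real) \<Rightarrow> bool" where
  "dimension_invariant nrm \<longleftrightarrow> matrix_norm_family nrm \<and>
    (\<forall>m n B R C. B \<in> carrier_mat m n \<longrightarrow> blocking R m \<longrightarrow> blocking C n \<longrightarrow>
       (\<forall>i < nblocks R. \<forall>j < nblocks C.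
          nrm (subm B (R ! i) (R ! Suc i) (C ! j) (C ! Suc j)) \<le> nrm B) \<and>
       nrm B \<le> (\<Sum>i < nblocks R. \<Sum>j < nblocks C.
                   nrm (subm B (R ! i) (R ! Suc i) (C ! j) (C ! Suc j))))"

definition submultiplicative :: "('a :: real_normed_field mat \<Rightarrow> real) \<Rightarrow> bool" where
  "submultiplicative nrm \<longleftrightarrow>
    (\<forall>m k n A B. A \<in> carrier_mat m k \<longrightarrow> B \<in> carrier_mat k n \<longrightarrow> nrm (A * B) \<le> nrm A * nrm B)"

end

theory Submission
  imports Defs "Jordan_Normal_Form.Determinant"
begin

definition vsub :: "'a vec \<Rightarrow> nat \<Rightarrow> nat \<Rightarrow> 'a vec" where
  "vsub v a b = vec (b - a) (\<lambda>i. v $ (a + i))"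

definition sc :: "'a :: field mat \<Rightarrow> nat \<Rightarrow> 'a mat" where
  "sc A p = (let m = dim_row A in subm A p m p m - subm A p m 0 p * minv (subm A 0 p 0 p) * subm A 0 p p m)"

lemma subm_carrier[simp]: "subm A r0 r1 c0 c1 \<in> carrier_mat (r1 - r0) (c1 - c0)"
  by (simp add: subm_def)

lemma subm_dims[simp]: "dim_row (subm A r0 r1 c0 c1) = r1 - r0" "dim_col (subm A r0 r1 c0 c1) = c1 - c0"
  by (simp_all add: subm_def)

lemma subm_index[simp]: "i < r1 - r0 \<Longrightarrow> j < c1 - c0 \<Longrightarrow> subm A r0 r1 c0 c1 $$ (i, j) = A $$ (r0 + i, c0 + j)"
  by (simp add: subm_def)

lemma vsub_carrier[simp]: "vsub v a b \<in> carrier_vec (b - a)"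
  by (simp add: vsub_def)

lemma vsub_carrier0[simp]: "vsub v 0 b \<in> carrier_vec b"
  by (simp add: vsub_def)

lemma subm_carrier0[simp]: "subm A 0 r1 c0 c1 \<in> carrier_mat r1 (c1 - c0)"
  "subm A r0 r1 0 c1 \<in> carrier_mat (r1 - r0) c1" "subm A 0 r1 0 c1 \<in> carrier_mat r1 c1"
  by (simp_all add: subm_def)

lemma vsub_dim[simp]: "dim_vec (vsub v a b) = b - a"
  by (simp add: vsub_def)

lemma vsub_index[simp]: "i < b - a \<Longrightarrow> vsub v a b $ i = v $ (a + i)"
  by (simp add: vsub_def)

lemma sum_split_nat: "(p::nat) \<le> n \<Longrightarrow> (\<Sum>j<n. f j) = (\<Sum>j<p. f j) + (\<Sum>j<n - p. f (p + j))"
proof -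
  assume "p \<le> n"
  then have "{..<n} = {..<p} \<union> {p..<n}" by (metis ivl_disj_un_one(2))
  then have "(\<Sum>j<n. f j) = (\<Sum>j<p. f j) + (\<Sum>j\<in>{p..<n}. f j)"
    by (simp add: sum.union_disjoint ivl_disj_int_one(2))
  also have "(\<Sum>j\<in>{p..<n}. f j) = (\<Sum>j<n - p. f (p + j))"
    using \<open>p \<le> n\<close> sum.shift_bounds_nat_ivl[of f 0 p "n - p"]
    by (simp add: lessThan_atLeast0 add.commute)
  finally show ?thesis .
qed

lemma vsub_mult_split:
  fixes A :: "'a :: comm_ring_1 mat"
  assumes A: "A \<in> carrier_mat n m" and v: "v \<in> carrier_vec m" and p: "p \<le> m" and ab: "a \<le> b" "b \<le> n"
  shows "vsub (A *\<^sub>v v) a b = subm A a b 0 p *\<^sub>v vsub v 0 p + subm A a b p m *\<^sub>v vsub v p m"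
proof (rule eq_vecI)
  fix i assume i: "i < dim_vec (subm A a b 0 p *\<^sub>v vsub v 0 p + subm A a b p m *\<^sub>v vsub v p m)"
  then have i': "i < b - a" by simp
  have "vsub (A *\<^sub>v v) a b $ i = (\<Sum>j<m. A $$ (a + i, j) * v $ j)"
    using i' A v ab by (simp add: scalar_prod_def lessThan_atLeast0)
  also have "\<dots> = (\<Sum>j<p. A $$ (a + i, j) * v $ j) + (\<Sum>j<m - p. A $$ (a + i, p + j) * v $ (p + j))"
    by (rule sum_split_nat[OF p])
  also have "\<dots> = (subm A a b 0 p *\<^sub>v vsub v 0 p + subm A a b p m *\<^sub>v vsub v p m) $ i"
    using i' by (simp add: scalar_prod_def lessThan_atLeast0)
  finally show "vsub (A *\<^sub>v v) a b $ i = (subm A a b 0 p *\<^sub>v vsub v 0 p + subm A a b p m *\<^sub>v vsub v p m) $ i" .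
qed simp

lemma minv_props:
  fixes M :: "'a :: field mat"
  assumes M: "M \<in> carrier_mat p p" and inv: "invertible_mat M"
  shows "minv M \<in> carrier_mat p p" "M * minv M = 1\<^sub>m p" "minv M * M = 1\<^sub>m p"
proof -
  obtain B where B: "inverts_mat M B" "inverts_mat B M" using inv unfolding invertible_mat_def by auto
  have Bc: "B \<in> carrier_mat p p" using B M unfolding inverts_mat_def
    by (metis carrier_matD(1) carrier_matD(2) carrier_matI index_mult_mat(2) index_mult_mat(3) index_one_mat(2) index_one_mat(3))
  have ex: "\<exists>B. B \<in> carrier_mat (dim_row M) (dim_row M) \<and> M * B = 1\<^sub>m (dim_row M) \<and> B * M = 1\<^sub>m (dim_row M)"
    using B Bc M unfolding inverts_mat_def by auto
  have "minv M \<in> carrier_mat (dim_row M) (dim_row M) \<and> M * minv M = 1\<^sub>m (dim_row M) \<and> minv M * M = 1\<^sub>m (dim_row M)"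
    unfolding minv_def using inv by simp (rule someI_ex[OF ex])
  then show "minv M \<in> carrier_mat p p" "M * minv M = 1\<^sub>m p" "minv M * M = 1\<^sub>m p" using M by auto
qed

lemma invertible_of_inj:
  fixes M :: "'a :: field mat"
  assumes M: "M \<in> carrier_mat p p"
    and inj: "\<And>z. z \<in> carrier_vec p \<Longrightarrow> M *\<^sub>v z = 0\<^sub>v p \<Longrightarrow> z = 0\<^sub>v p"
  shows "invertible_mat M"
proof -
  have "det M \<noteq> 0" using det_0_iff_vec_prod_zero_field[OF M] inj by auto
  from det_non_zero_imp_unit[OF M this, of "()"]
  obtain B where B: "B \<in> carrier_mat p p" "B * M = 1\<^sub>m p" "M * B = 1\<^sub>m p"
    unfolding Units_def ring_mat_def by auto
  then show ?thesis using M unfolding invertible_mat_def inverts_mat_def square_mat.simps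
    by auto
qed

lemma sc_carrier: "A \<in> carrier_mat n n \<Longrightarrow> p \<le> n \<Longrightarrow> sc A p \<in> carrier_mat (n - p) (n - p)"
  unfolding sc_def Let_def by auto

lemma mult_mat_vec_uminus: fixes A :: "'a :: ring mat"
  assumes "dim_vec v = dim_col A" shows "A *\<^sub>v (- v) = - (A *\<^sub>v v)"
  using assms by (intro eq_vecI) auto

lemma sc_char:
  fixes A :: "'a :: field mat"
  assumes A: "A \<in> carrier_mat n n" and p: "p \<le> n" and inv: "invertible_mat (subm A 0 p 0 p)"
    and v: "v \<in> carrier_vec n" and top: "vsub (A *\<^sub>v v) 0 p = 0\<^sub>v p"
  shows "sc A p *\<^sub>v vsub v p n = vsub (A *\<^sub>v v) p n"
proof -
  define x where "x = vsub v 0 p"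
  define w where "w = vsub v p n"
  define A11 where "A11 = subm A 0 p 0 p"
  define A12 where "A12 = subm A 0 p p n"
  define A21 where "A21 = subm A p n 0 p"
  define A22 where "A22 = subm A p n p n"
  define E where "E = minv A11"
  have c: "x \<in> carrier_vec p" "w \<in> carrier_vec (n - p)" "A11 \<in> carrier_mat p p" "A12 \<in> carrier_mat p (n - p)"
    "A21 \<in> carrier_mat (n - p) p" "A22 \<in> carrier_mat (n - p) (n - p)"
    unfolding x_def w_def A11_def A12_def A21_def A22_def by auto
  have E: "E \<in> carrier_mat p p" "E * A11 = 1\<^sub>m p"
    using minv_props[OF c(3)] inv unfolding E_def A11_def by auto
  have h1: "A11 *\<^sub>v x + A12 *\<^sub>v w = 0\<^sub>v p"
    using vsub_mult_split[OF A v p, of 0 p] top p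
    unfolding x_def w_def A11_def A12_def by simp
  have h2: "A11 *\<^sub>v x = - (A12 *\<^sub>v w)"
  proof (rule eq_vecI)
    fix i assume "i < dim_vec (- (A12 *\<^sub>v w))"
    then have i: "i < p" using c by simp
    have "(A11 *\<^sub>v x + A12 *\<^sub>v w) $ i = 0" using h1 i by simp
    then show "(A11 *\<^sub>v x) $ i = (- (A12 *\<^sub>v w)) $ i" using i c
      by (simp add: eq_neg_iff_add_eq_0)
  qed (use c in simp)
  have h3: "x = - (E *\<^sub>v (A12 *\<^sub>v w))"
  proof -
    have "x = 1\<^sub>m p *\<^sub>v x" using c by simp
    also have "\<dots> = (E * A11) *\<^sub>v x" using E by simp
    also have "\<dots> = E *\<^sub>v (A11 *\<^sub>v x)" using E(1) c(1) c(3) by (metis assoc_mult_mat_vec)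
    also have "\<dots> = - (E *\<^sub>v (A12 *\<^sub>v w))" unfolding h2 using E c
      by (simp add: mult_mat_vec_uminus)
    finally show ?thesis .
  qed
  have bot: "vsub (A *\<^sub>v v) p n = A21 *\<^sub>v x + A22 *\<^sub>v w"
    using vsub_mult_split[OF A v p, of p n] p
    unfolding x_def w_def A21_def A22_def by simp
  have scd: "sc A p = A22 - A21 * E * A12"
    using A unfolding sc_def Let_def A22_def A21_def E_def A11_def A12_def by simp
  have "sc A p *\<^sub>v w = A22 *\<^sub>v w - (A21 * E * A12) *\<^sub>v w"
    unfolding scd using c E by (intro minus_mult_distrib_mat_vec) auto
  also have "(A21 * E * A12) *\<^sub>v w = (A21 * E) *\<^sub>v (A12 *\<^sub>v w)"
    using c E by (intro assoc_mult_mat_vec[where n\<^sub>2 = p]) auto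
  also have "(A21 * E) *\<^sub>v (A12 *\<^sub>v w) = A21 *\<^sub>v (E *\<^sub>v (A12 *\<^sub>v w))"
    using c E by (intro assoc_mult_mat_vec[where n\<^sub>2 = p]) auto
  finally have "sc A p *\<^sub>v w = A22 *\<^sub>v w - A21 *\<^sub>v (E *\<^sub>v (A12 *\<^sub>v w))" .
  also have "\<dots> = A21 *\<^sub>v x + A22 *\<^sub>v w"
    unfolding h3 using c E
    by (intro eq_vecI) (auto simp: mult_mat_vec_uminus)
  finally show ?thesis unfolding bot w_def .
qed

lemma mult_mat_vec_zero: "A \<in> carrier_mat m k \<Longrightarrow> A *\<^sub>v 0\<^sub>v k = (0\<^sub>v m :: 'a :: semiring_0 vec)"
  by (intro eq_vecI) auto

lemma mult_mat_vec_zero': "dim_col A = k \<Longrightarrow> A *\<^sub>v 0\<^sub>v k = (0\<^sub>v (dim_row A) :: 'a :: semiring_0 vec)"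
  by (intro eq_vecI) auto

lemma vsub_vsub: "d \<le> b - a \<Longrightarrow> vsub (vsub v a b) c d = vsub v (a + c) (a + d)"
  by (intro eq_vecI) (auto simp: add.assoc)

lemma vsub_app1: "x \<in> carrier_vec a \<Longrightarrow> vsub (x @\<^sub>v w) 0 a = x"
  by (intro eq_vecI) auto

lemma vsub_app2: "x \<in> carrier_vec a \<Longrightarrow> w \<in> carrier_vec b \<Longrightarrow> c = a + b \<Longrightarrow> vsub (x @\<^sub>v w) a c = w"
  by (intro eq_vecI) auto

lemma vsub_zero: "b \<le> n \<Longrightarrow> vsub (0\<^sub>v n) a b = (0\<^sub>v (b - a) :: 'a :: zero vec)"
  by (intro eq_vecI) auto

lemma vsub_join0:
  assumes "p \<le> q" "q \<le> dim_vec u" "vsub u 0 p = 0\<^sub>v p" "vsub u p q = 0\<^sub>v (q - p)"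
  shows "vsub u 0 q = 0\<^sub>v q"
proof (rule eq_vecI)
  fix i assume "i < dim_vec (0\<^sub>v q :: 'a vec)"
  then have i: "i < q" by simp
  show "vsub u 0 q $ i = 0\<^sub>v q $ i"
  proof (cases "i < p")
    case True
    then show ?thesis using i arg_cong[OF assms(3), of "\<lambda>v. v $ i"] by simp
  next
    case False
    then have "i - p < q - p" using i by simp
    then show ?thesis using i False arg_cong[OF assms(4), of "\<lambda>v. v $ (i - p)"] by simp
  qed
qed simp

lemma mat_eq_vec:
  assumes "S1 \<in> carrier_mat m s" "S2 \<in> carrier_mat m s"
    and eq: "\<And>y. y \<in> carrier_vec s \<Longrightarrow> S1 *\<^sub>v y = S2 *\<^sub>v (y :: 'a :: semiring_1 vec)"
  shows "S1 = S2"
proof (rule eq_matI)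
  fix i j assume ij: "i < dim_row S2" "j < dim_col S2"
  have "(S1 *\<^sub>v unit_vec s j) $ i = (S2 *\<^sub>v unit_vec s j) $ i" using eq[of "unit_vec s j"] by simp
  then show "S1 $$ (i, j) = S2 $$ (i, j)" using ij assms(1,2) by simp
qed (use assms in auto)

lemma solve_vec:
  fixes M :: "'a :: field mat"
  assumes M: "M \<in> carrier_mat q q" and inv: "invertible_mat M" and t: "t \<in> carrier_vec q"
  shows "M *\<^sub>v (- (minv M *\<^sub>v t)) + t = 0\<^sub>v q"
proof -
  note mp = minv_props[OF M inv]
  have "M *\<^sub>v (minv M *\<^sub>v t) = (M * minv M) *\<^sub>v t"
    using M mp t by (metis assoc_mult_mat_vec)
  also have "\<dots> = t" using mp t by simp
  finally have e: "M *\<^sub>v (minv M *\<^sub>v t) = t" .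
  have "M *\<^sub>v (- (minv M *\<^sub>v t)) = - t"
    using mult_mat_vec_uminus[of "minv M *\<^sub>v t" M] e M mp by simp
  then show ?thesis using t by (intro eq_vecI) auto
qed

lemma inj_inv:
  fixes M :: "'a :: field mat"
  assumes M: "M \<in> carrier_mat q q" and inv: "invertible_mat M" and z: "z \<in> carrier_vec q"
    and "M *\<^sub>v z = 0\<^sub>v q"
  shows "z = 0\<^sub>v q"
proof -
  note mp = minv_props[OF M inv]
  have "z = (minv M * M) *\<^sub>v z" using mp z by simp
  also have "\<dots> = minv M *\<^sub>v (M *\<^sub>v z)" using M mp z by (metis assoc_mult_mat_vec)
  also have "\<dots> = 0\<^sub>v q" using assms(4) mp by (simp add: mult_mat_vec_zero)
  finally show ?thesis .
qed

lemma sc_inv: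
  fixes A :: "'a :: field mat"
  assumes A: "A \<in> carrier_mat n n" and pq: "p \<le> q" "q \<le> n"
    and inv1: "invertible_mat (subm A 0 p 0 p)" and inv2: "invertible_mat (subm A 0 q 0 q)"
  shows "invertible_mat (subm (sc A p) 0 (q - p) 0 (q - p))"
proof (rule invertible_of_inj)
  show "subm (sc A p) 0 (q - p) 0 (q - p) \<in> carrier_mat (q - p) (q - p)" by simp
  fix z :: "'a vec" assume z: "z \<in> carrier_vec (q - p)"
    and Cz: "subm (sc A p) 0 (q - p) 0 (q - p) *\<^sub>v z = 0\<^sub>v (q - p)"
  define B where "B = sc A p"
  define r where "r = q - p"
  have B: "B \<in> carrier_mat (n - p) (n - p)" using sc_carrier[OF A] pq unfolding B_def by simp
  define w where "w = z @\<^sub>v 0\<^sub>v (n - q)"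
  have w: "w \<in> carrier_vec (n - p)"
  proof -
    have "w \<in> carrier_vec ((q - p) + (n - q))" using z unfolding w_def by auto
    moreover have "(q - p) + (n - q) = n - p" using pq by simp
    ultimately show ?thesis by simp
  qed
  define x where "x = - (minv (subm A 0 p 0 p) *\<^sub>v (subm A 0 p p n *\<^sub>v w))"
  have x: "x \<in> carrier_vec p" using minv_props[OF subm_carrier0(3) inv1] unfolding x_def carrier_vec_def by (auto dest: carrier_matD)
  define v where "v = x @\<^sub>v w"
  have v: "v \<in> carrier_vec n"
  proof -
    have "v \<in> carrier_vec (p + (n - p))" using x w unfolding v_def by auto
    moreover have "p + (n - p) = n" using pq by simp
    ultimately show ?thesis by simp
  qed
  have vx: "vsub v 0 p = x" unfolding v_def using x by (rule vsub_app1)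
  have vw: "vsub v p n = w" unfolding v_def using x w pq by (intro vsub_app2) auto
  have Aw: "subm A 0 p p n *\<^sub>v w \<in> carrier_vec p"
    by (rule mult_mat_vec_carrier[OF subm_carrier0(1) w])
  have top: "vsub (A *\<^sub>v v) 0 p = 0\<^sub>v p"
    using Aw vsub_mult_split[OF A v, of p 0 p] pq vx vw solve_vec[OF _ inv1, where q=p and t="subm A 0 p p n *\<^sub>v w"] w
    unfolding x_def by simp
  have Bw: "B *\<^sub>v w = vsub (A *\<^sub>v v) p n"
    using sc_char[OF A _ inv1 v top] pq vw unfolding B_def by simp
  have wz: "vsub w 0 r = z" unfolding w_def r_def using z by (rule vsub_app1)
  have w0: "vsub w r (n - p) = 0\<^sub>v (n - q)" unfolding w_def r_def using z pq
    by (intro vsub_app2[where b="n - q"]) auto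
  have "vsub (B *\<^sub>v w) 0 r = subm B 0 r 0 r *\<^sub>v vsub w 0 r + subm B 0 r r (n - p) *\<^sub>v vsub w r (n - p)"
    using vsub_mult_split[OF B w, of r 0 r] pq unfolding r_def by simp
  also have "\<dots> = 0\<^sub>v r" using Cz wz w0 pq unfolding r_def B_def
    by (simp add: mult_mat_vec_zero')
  finally have "vsub (vsub (A *\<^sub>v v) p n) 0 r = 0\<^sub>v r" unfolding Bw .
  then have mid: "vsub (A *\<^sub>v v) p q = 0\<^sub>v (q - p)"
    using vsub_vsub[of r n p "A *\<^sub>v v" 0] pq unfolding r_def by simp
  have top2: "vsub (A *\<^sub>v v) 0 q = 0\<^sub>v q"
    using vsub_join0[OF pq(1) _ top mid] pq A by simp
  have vq: "vsub v q n = 0\<^sub>v (n - q)"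
    using w0 vw vsub_vsub[of "n - p" n p v r] pq unfolding r_def by simp
  have "subm A 0 q 0 q *\<^sub>v vsub v 0 q + subm A 0 q q n *\<^sub>v vsub v q n = 0\<^sub>v q"
    using vsub_mult_split[OF A v, of q 0 q] pq top2 by simp
  then have "subm A 0 q 0 q *\<^sub>v vsub v 0 q = 0\<^sub>v q"
    unfolding vq using mult_mat_vec_zero[of "subm A 0 q q n" q "n - q"] right_zero_vec[OF mult_mat_vec_carrier[OF subm_carrier0(3) vsub_carrier0]] subm_carrier0(1) by metis
  then have v0: "vsub v 0 q = 0\<^sub>v q" using inj_inv[OF _ inv2] by simp
  have e1: "vsub (vsub v 0 q) p q = vsub v p q" using vsub_vsub[of q q 0 v p] by simp
  have e2: "vsub (vsub v p n) 0 r = vsub v p q" using vsub_vsub[of r n p v 0] pq unfolding r_def by simp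
  have "z = vsub (vsub v 0 q) p q" using e1 e2 wz vw by simp
  then show "z = 0\<^sub>v (q - p)" using v0 vsub_zero[of q q p] by simp
qed

lemma sc_quot:
  fixes A :: "'a :: field mat"
  assumes A: "A \<in> carrier_mat n n" and pq: "p \<le> q" "q \<le> n"
    and inv1: "invertible_mat (subm A 0 p 0 p)" and inv2: "invertible_mat (subm A 0 q 0 q)"
  shows "sc (sc A p) (q - p) = sc A q"
proof -
  define B where "B = sc A p"
  define r where "r = q - p"
  have B: "B \<in> carrier_mat (n - p) (n - p)" using sc_carrier[OF A] pq unfolding B_def by simp
  have invB: "invertible_mat (subm B 0 r 0 r)" using sc_inv[OF A pq inv1 inv2] unfolding B_def r_def .
  have "n - p - r = n - q" using pq unfolding r_def by simp
  then have c1: "sc B r \<in> carrier_mat (n - q) (n - q)" using sc_carrier[OF B, of r] pq unfolding r_def by simp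
  show ?thesis unfolding B_def[symmetric] r_def[symmetric]
  proof (rule mat_eq_vec[OF c1 sc_carrier[OF A pq(2)]])
    fix y :: "'a vec" assume y: "y \<in> carrier_vec (n - q)"
    define M where "M = subm A 0 q 0 q"
    have M: "M \<in> carrier_mat q q" unfolding M_def by simp
    have Ay: "subm A 0 q q n *\<^sub>v y \<in> carrier_vec q"
      by (rule mult_mat_vec_carrier[OF subm_carrier0(1) y])
    define u where "u = - (minv M *\<^sub>v (subm A 0 q q n *\<^sub>v y))"
    have u: "u \<in> carrier_vec q" using minv_props[OF M inv2[folded M_def]] unfolding u_def carrier_vec_def
      by (auto dest: carrier_matD)
    define v where "v = u @\<^sub>v y"
    have v: "v \<in> carrier_vec n"
    proof -
      have "v \<in> carrier_vec (q + (n - q))" using u y unfolding v_def by auto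
      moreover have "q + (n - q) = n" using pq by simp
      ultimately show ?thesis by simp
    qed
    have vu: "vsub v 0 q = u" unfolding v_def using u by (rule vsub_app1)
    have vy: "vsub v q n = y" unfolding v_def using u y pq by (intro vsub_app2) auto
    have top: "vsub (A *\<^sub>v v) 0 q = 0\<^sub>v q"
      using vsub_mult_split[OF A v, of q 0 q] pq vu vy solve_vec[OF M inv2[folded M_def] Ay]
      unfolding u_def M_def by simp
    have top1: "vsub (A *\<^sub>v v) 0 p = 0\<^sub>v p"
      using arg_cong[OF top, of "\<lambda>t. vsub t 0 p"] vsub_vsub[of p q 0 "A *\<^sub>v v" 0] vsub_zero[of p q 0] pq
      by simp
    have mid: "vsub (A *\<^sub>v v) p q = 0\<^sub>v r"
      using arg_cong[OF top, of "\<lambda>t. vsub t p q"] vsub_vsub[of q q 0 "A *\<^sub>v v" p] vsub_zero[of q q p] pq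
      unfolding r_def by simp
    define w where "w = vsub v p n"
    have w: "w \<in> carrier_vec (n - p)" unfolding w_def by simp
    have Bw: "B *\<^sub>v w = vsub (A *\<^sub>v v) p n"
      using sc_char[OF A _ inv1 v top1] pq unfolding B_def w_def by simp
    have "vsub (B *\<^sub>v w) 0 r = vsub (A *\<^sub>v v) p q"
      unfolding Bw using vsub_vsub[of r n p "A *\<^sub>v v" 0] pq unfolding r_def by simp
    then have topB: "vsub (B *\<^sub>v w) 0 r = 0\<^sub>v r" using mid by simp
    have rle: "r \<le> n - p" using pq unfolding r_def by simp
    have "sc B r *\<^sub>v vsub w r (n - p) = vsub (B *\<^sub>v w) r (n - p)"
      by (rule sc_char[OF B rle invB w topB])
    also have "\<dots> = vsub (A *\<^sub>v v) q n"
      unfolding Bw using vsub_vsub[of "n - p" n p "A *\<^sub>v v" r] pq unfolding r_def by simp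
    also have "\<dots> = sc A q *\<^sub>v vsub v q n"
      using sc_char[OF A pq(2) inv2 v top] by simp
    finally show "sc B r *\<^sub>v y = sc A q *\<^sub>v y"
      using vy vsub_vsub[of "n - p" n p v r] pq unfolding w_def r_def by simp
  qed
qed

lemma schur_Suc_sc: "schur I A (Suc k) = sc (schur I A k) (I ! Suc k - I ! k)"
  by (simp add: sc_def Let_def)

lemma blocking_facts:
  assumes "blocking I n"
  shows "nblocks I \<ge> 1" "I ! 0 = 0" "I ! nblocks I = n"
    "\<And>i j. i < j \<Longrightarrow> j \<le> nblocks I \<Longrightarrow> I ! i < I ! j"
    "\<And>k. k \<le> nblocks I \<Longrightarrow> I ! k \<le> n"
proof -
  have L: "length I \<ge> 2" "sorted_wrt (<) I" "I ! 0 = 0" "last I = n"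
    using assms unfolding blocking_def by auto
  show "nblocks I \<ge> 1" "I ! 0 = 0" using L unfolding nblocks_def by auto
  have "I \<noteq> []" using L(1) by auto
  then show nb: "I ! nblocks I = n" using L last_conv_nth[of I] unfolding nblocks_def by simp
  show lt: "\<And>i j. i < j \<Longrightarrow> j \<le> nblocks I \<Longrightarrow> I ! i < I ! j"
    using L(1,2) sorted_wrt_nth_less[of "(<)" I] unfolding nblocks_def by auto
  show "\<And>k. k \<le> nblocks I \<Longrightarrow> I ! k \<le> n"
    using lt nb by (metis le_eq_less_or_eq less_imp_le)
qed

lemma schur_eq_sc:
  fixes A :: "'a :: field mat"
  assumes A: "A \<in> carrier_mat n n" and bl: "blocking I n" and bsn: "block_strongly_nonsingular I A"
  shows "1 \<le> k \<Longrightarrow> k \<le> nblocks I \<Longrightarrow> schur I A k = sc A (I ! k)"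
proof (induction k)
  case 0
  then show ?case by simp
next
  case (Suc k)
  note bf = blocking_facts[OF bl]
  show ?case
  proof (cases "k = 0")
    case True
    have "schur I A (Suc 0) = sc A (I ! Suc 0 - I ! 0)" by (simp only: schur_Suc_sc schur.simps(1))
    then show ?thesis using bf True by simp
  next
    case False
    then have IH: "schur I A k = sc A (I ! k)" using Suc by simp
    have inv: "invertible_mat (subm A 0 (I ! j) 0 (I ! j))" if "1 \<le> j" "j \<le> nblocks I" for j
      using bsn that bf(2) unfolding block_strongly_nonsingular_def blk_def by auto
    have "schur I A (Suc k) = sc (sc A (I ! k)) (I ! Suc k - I ! k)"
      by (simp only: schur_Suc_sc IH)
    also have "\<dots> = sc A (I ! Suc k)"
      using sc_quot[OF A _ _ inv[of k] inv[of "Suc k"]] bf(4)[of k "Suc k"] bf(5)[of "Suc k"] Suc.prems False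
      by simp
    finally show ?thesis .
  qed
qed

lemma nrm_facts:
  fixes nrm :: "'a :: real_normed_field mat \<Rightarrow> real"
  assumes "matrix_norm_family nrm"
  shows "\<And>X. 0 \<le> nrm X"
    and "\<And>X Y a b. X \<in> carrier_mat a b \<Longrightarrow> Y \<in> carrier_mat a b \<Longrightarrow> nrm (X - Y) \<le> nrm X + nrm Y"
proof -
  show nn: "\<And>X. 0 \<le> nrm X"
  proof -
    fix X :: "'a mat"
    have "X \<in> carrier_mat (dim_row X) (dim_col X)" by auto
    then show "0 \<le> nrm X" using assms unfolding matrix_norm_family_def by blast
  qed
  fix X Y :: "'a mat" and a b assume X: "X \<in> carrier_mat a b" and Y: "Y \<in> carrier_mat a b"
  have e: "X - Y = X + (-1) \<cdot>\<^sub>m Y" using X Y by (intro eq_matI) auto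
  have Y': "(-1) \<cdot>\<^sub>m Y \<in> carrier_mat a b" using Y by simp
  have "nrm (X + (-1) \<cdot>\<^sub>m Y) \<le> nrm X + nrm ((-1) \<cdot>\<^sub>m Y)"
    using assms X Y' unfolding matrix_norm_family_def by blast
  also have "nrm ((-1) \<cdot>\<^sub>m Y) = norm (-1 :: 'a) * nrm Y"
    using assms Y unfolding matrix_norm_family_def by blast
  finally show "nrm (X - Y) \<le> nrm X + nrm Y" unfolding e by simp
qed

lemma schur_bound:
  fixes nrm :: "'a :: real_normed_field mat \<Rightarrow> real"
  assumes DI: "dimension_invariant nrm" and SM: "submultiplicative nrm"
    and A: "A \<in> carrier_mat n n" and bl: "blocking I n" and bsn: "block_strongly_nonsingular I A"
    and k: "1 \<le> k" "k < nblocks I"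
  shows "nrm (schur I A k) \<le> nrm A + nrm A * (nrm (minv (blk I A 0 k 0 k)) *
            min (nrm (blk I A k (nblocks I) 0 k)) (nrm (blk I A 0 k k (nblocks I))))"
    and "min (nrm (blk I A k (nblocks I) 0 k)) (nrm (blk I A 0 k k (nblocks I))) \<le> nrm A"
proof -
  note bf = blocking_facts[OF bl]
  have MF: "matrix_norm_family nrm" using DI unfolding dimension_invariant_def by simp
  note nf = nrm_facts[OF MF]
  define p where "p = I ! k"
  have p: "0 < p" "p < n" using bf(4)[of 0 k] bf(4)[of k "nblocks I"] bf(2,3) k unfolding p_def by auto
  define R where "R = [0, p, n]"
  have blR: "blocking R n" unfolding R_def blocking_def using p by simp
  have nbR: "nblocks R = 2" unfolding R_def nblocks_def by simp
  have blk_le: "\<And>i j. i < 2 \<Longrightarrow> j < 2 \<Longrightarrow> nrm (subm A (R ! i) (R ! Suc i) (R ! j) (R ! Suc j)) \<le> nrm A"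
    using DI A blR nbR unfolding dimension_invariant_def by metis
  define A11 where "A11 = subm A 0 p 0 p"
  define A12 where "A12 = subm A 0 p p n"
  define A21 where "A21 = subm A p n 0 p"
  define A22 where "A22 = subm A p n p n"
  define E where "E = minv A11"
  have b22: "nrm A22 \<le> nrm A" using blk_le[of 1 1] unfolding A22_def R_def by simp
  have b21: "nrm A21 \<le> nrm A" using blk_le[of 1 0] unfolding A21_def R_def by simp
  have b12: "nrm A12 \<le> nrm A" using blk_le[of 0 1] unfolding A12_def R_def by simp
  have eqs: "blk I A 0 k 0 k = A11" "blk I A k (nblocks I) 0 k = A21" "blk I A 0 k k (nblocks I) = A12"
    unfolding blk_def A11_def A21_def A12_def p_def using bf(2,3) by auto
  have inv: "invertible_mat A11" using bsn k eqs(1) unfolding block_strongly_nonsingular_def by auto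
  have E: "E \<in> carrier_mat p p" using minv_props[OF _ inv] unfolding E_def A11_def by simp
  have sch: "schur I A k = A22 - A21 * E * A12"
    using schur_eq_sc[OF A bl bsn k(1)] k A
    unfolding sc_def Let_def A22_def A21_def E_def A11_def A12_def p_def by simp
  have c: "A21 \<in> carrier_mat (n - p) p" "A12 \<in> carrier_mat p (n - p)" "A22 \<in> carrier_mat (n - p) (n - p)"
    unfolding A21_def A12_def A22_def by auto
  have "nrm (A21 * E * A12) \<le> nrm (A21 * E) * nrm A12"
    using SM c E unfolding submultiplicative_def by (meson mult_carrier_mat)
  also have "\<dots> \<le> (nrm A21 * nrm E) * nrm A12"
    using SM c E nf(1)[of A12] unfolding submultiplicative_def by (meson mult_right_mono)
  finally have prod: "nrm (A21 * E * A12) \<le> nrm A21 * nrm E * nrm A12" .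
  have "nrm A21 * nrm A12 \<le> min (nrm A21) (nrm A12) * nrm A"
  proof (cases "nrm A21 \<le> nrm A12")
    case True
    then show ?thesis using b12 nf(1)[of A21] by (simp add: min_def mult_left_mono)
  next
    case False
    then show ?thesis using b21 nf(1)[of A12] by (simp add: min_def) (metis mult.commute mult_left_mono)
  qed
  then have X: "nrm E * (nrm A21 * nrm A12) \<le> nrm E * (min (nrm A21) (nrm A12) * nrm A)"
    using nf(1)[of E] by (rule mult_left_mono)
  then have "nrm A21 * nrm E * nrm A12 \<le> nrm A * (nrm E * min (nrm A21) (nrm A12))"
    by (simp add: ac_simps)
  then have "nrm (A21 * E * A12) \<le> nrm A * (nrm E * min (nrm A21) (nrm A12))" using prod by linarith
  moreover have "nrm (schur I A k) \<le> nrm A22 + nrm (A21 * E * A12)"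
    unfolding sch using nf(2)[OF c(3)] c E by (metis mult_carrier_mat)
  ultimately show "nrm (schur I A k) \<le> nrm A + nrm A * (nrm (minv (blk I A 0 k 0 k)) *
            min (nrm (blk I A k (nblocks I) 0 k)) (nrm (blk I A 0 k k (nblocks I))))"
    unfolding eqs E_def[symmetric] using b22 by linarith
  show "min (nrm (blk I A k (nblocks I) 0 k)) (nrm (blk I A 0 k k (nblocks I))) \<le> nrm A"
    unfolding eqs using b21 by linarith
qed

theorem theorem2p2:
  fixes nrm :: "'a :: real_normed_field mat \<Rightarrow> real"
    and A :: "'a mat" and I :: "nat list" and n :: nat
  assumes "dimension_invariant nrm"
    and "submultiplicative nrm"
    and "A \<in> carrier_mat n n"
    and "blocking I n"
    and "block_strongly_nonsingular I A"
  shows "growth_factor nrm I A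
           \<le> 1 + Max (insert 0 ((\<lambda>k. nrm (minv (blk I A 0 k 0 k)) *
                   min (nrm (blk I A k (nblocks I) 0 k)) (nrm (blk I A 0 k k (nblocks I))))
                 ` {1..<nblocks I}))
       \<and> 1 + Max (insert 0 ((\<lambda>k. nrm (minv (blk I A 0 k 0 k)) *
                   min (nrm (blk I A k (nblocks I) 0 k)) (nrm (blk I A 0 k k (nblocks I))))
                 ` {1..<nblocks I}))
           \<le> 1 + Max (insert 0 ((\<lambda>k. nrm (minv (blk I A 0 k 0 k)) * nrm A) ` {1..<nblocks I}))"
proof -
  let ?nb = "nblocks I"
  let ?S = "{1..<nblocks I}"
  define f where "f k = nrm (minv (blk I A 0 k 0 k)) *
                   min (nrm (blk I A k (nblocks I) 0 k)) (nrm (blk I A 0 k k (nblocks I)))" for k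
  define g where "g k = nrm (minv (blk I A 0 k 0 k)) * nrm A" for k
  note bf = blocking_facts[OF assms(4)]
  have MF: "matrix_norm_family nrm" using assms(1) unfolding dimension_invariant_def by simp
  note nf = nrm_facts[OF MF]
  have fin: "finite (insert 0 (f ` ?S))" "finite (insert 0 (g ` ?S))" by auto
  have M0: "0 \<le> Max (insert 0 (f ` ?S))" using fin by (intro Max_ge) auto
  have Mf: "f k \<le> Max (insert 0 (f ` ?S))" if "k \<in> ?S" for k using fin that by (intro Max_ge) auto
  have part1: "growth_factor nrm I A \<le> 1 + Max (insert 0 (f ` ?S))"
    unfolding growth_factor_def
  proof (subst Max_le_iff)
    show "finite ((\<lambda>k. nrm (schur I A k) / nrm A) ` {..<?nb})" by simp
    show "(\<lambda>k. nrm (schur I A k) / nrm A) ` {..<?nb} \<noteq> {}" using bf(1) by (auto simp: lessThan_empty_iff)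
    show "\<forall>a\<in>(\<lambda>k. nrm (schur I A k) / nrm A) ` {..<?nb}. a \<le> 1 + Max (insert 0 (f ` ?S))"
    proof
      fix a assume "a \<in> (\<lambda>k. nrm (schur I A k) / nrm A) ` {..<?nb}"
      then obtain k where k: "k < ?nb" and a: "a = nrm (schur I A k) / nrm A" by auto
      show "a \<le> 1 + Max (insert 0 (f ` ?S))"
      proof (cases "k = 0")
        case True
        then have "a \<le> 1" unfolding a by (cases "nrm A = 0") auto
        then show ?thesis using M0 by linarith
      next
        case False
        then have kS: "k \<in> ?S" using k by auto
        have b: "nrm (schur I A k) \<le> nrm A * (1 + f k)"
          using schur_bound(1)[OF assms, of k] kS unfolding f_def by (simp add: algebra_simps)
        show ?thesis
        proof (cases "nrm A = 0")
          case True
          then show ?thesis unfolding a using M0 by simp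
        next
          case False
          then have pos: "0 < nrm A" using nf(1)[of A] by linarith
          have "a \<le> 1 + f k" unfolding a using b pos by (simp add: pos_divide_le_eq mult.commute)
          then show ?thesis using Mf[OF kS] by linarith
        qed
      qed
    qed
  qed
  have part2: "Max (insert 0 (f ` ?S)) \<le> Max (insert 0 (g ` ?S))"
  proof (subst Max_le_iff)
    show "finite (insert 0 (f ` ?S))" "insert 0 (f ` ?S) \<noteq> {}" by auto
    show "\<forall>a\<in>insert 0 (f ` ?S). a \<le> Max (insert 0 (g ` ?S))"
    proof
      fix a assume "a \<in> insert 0 (f ` ?S)"
      then consider "a = 0" | k where "k \<in> ?S" "a = f k" by auto
      then show "a \<le> Max (insert 0 (g ` ?S))"
      proof cases
        case 1
        then show ?thesis using fin by (intro Max_ge) auto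
      next
        case (2 k)
        have "f k \<le> g k" unfolding f_def g_def
          using schur_bound(2)[OF assms, of k] 2(1) nf(1) by (simp add: mult_left_mono)
        also have "g k \<le> Max (insert 0 (g ` ?S))" using fin 2(1) by (intro Max_ge) auto
        finally show ?thesis using 2(2) by simp
      qed
    qed
  qed
  show ?thesis using part1 part2 unfolding f_def g_def by simp
qed

end
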